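(* Let $\mathcal A$ be a Banach algebra such that the ultrapower $(\mathcal A)_{\mathcal U}$ is simple for some non-principal ultrafilter $\mathcal U$ on $\mathbb N$. Then for every Banach algebra $\mathcal B$, every non-zero continuous algebra homomorphism $\psi:\mathcal A\to\mathcal B$ is bounded below, i.e. there is $c>0$ with $\|\psi(a)\|\geqslant c\|a\|$ for all $a\in\mathcal A$.
   Context: For an ultrafilter $\mathcal U$ on $\mathbb N$, the ultrapower is $(\mathcal A)_{\mathcal U}=\ell^\infty(\mathcal A)/c_{\mathcal U}(\mathcal A)$, where $\ell^\infty(\mathcal A)$ is the Banach algebra of bounded sequences in $\mathcal A$ with pointwise operations and sup norm, and $c_{\mathcal U}(\mathcal A)$ is the closed ideal of sequences $(a_n)$ with $\lim_{n\to\mathcal U}\|a_n\|=0$. An algebra is simple if its only two-sided ideals are $\{0\}$ and itself. *)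

theory Defs
  imports "HOL-Analysis.Analysis"
begin

definition is_ultrafilter :: "nat filter \<Rightarrow> bool" where
  "is_ultrafilter U \<longleftrightarrow> U \<noteq> bot \<and> (\<forall>A. eventually (\<lambda>n. n \<in> A) U \<or> eventually (\<lambda>n. n \<notin> A) U)"

definition non_principal :: "nat filter \<Rightarrow> bool" where
  "non_principal U \<longleftrightarrow> (\<forall>k. \<not> eventually (\<lambda>n. n = k) U)"

definition linf :: "(nat \<Rightarrow> 'a::real_normed_vector) set" where
  "linf = {x. bounded (range x)}"

definition cU :: "nat filter \<Rightarrow> (nat \<Rightarrow> 'a::real_normed_vector) set" where
  "cU U = {x \<in> linf. ((\<lambda>n. norm (x n)) \<longlongrightarrow> 0) U}"

definition ucls :: "nat filter \<Rightarrow> (nat \<Rightarrow> 'a::real_normed_vector) \<Rightarrow> (nat \<Rightarrow> 'a) set" where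
  "ucls U x = {y \<in> linf. (\<lambda>n. x n - y n) \<in> cU U}"

definition ultrapower :: "nat filter \<Rightarrow> (nat \<Rightarrow> 'a::real_normed_vector) set set" where
  "ultrapower U = ucls U ` linf"

text \<open>Two-sided (algebra) ideals of the ultrapower; operations on cosets are
  the pointwise ones on representatives.\<close>
definition ultra_ideal :: "nat filter \<Rightarrow> (nat \<Rightarrow> 'a::real_normed_algebra) set set \<Rightarrow> bool" where
  "ultra_ideal U I \<longleftrightarrow>
     I \<subseteq> ultrapower U \<and>
     ucls U (\<lambda>n. 0) \<in> I \<and>
     (\<forall>x\<in>linf. \<forall>y\<in>linf. ucls U x \<in> I \<longrightarrow> ucls U y \<in> I \<longrightarrow> ucls U (\<lambda>n. x n + y n) \<in> I) \<and>
     (\<forall>x\<in>linf. \<forall>c::real. ucls U x \<in> I \<longrightarrow> ucls U (\<lambda>n. c *\<^sub>R x n) \<in> I) \<and>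
     (\<forall>x\<in>linf. \<forall>a\<in>linf. ucls U x \<in> I \<longrightarrow>
        ucls U (\<lambda>n. a n * x n) \<in> I \<and> ucls U (\<lambda>n. x n * a n) \<in> I)"

definition ultrapower_simple :: "nat filter \<Rightarrow> 'a::real_normed_algebra itself \<Rightarrow> bool" where
  "ultrapower_simple U _ \<longleftrightarrow>
     (\<forall>I :: (nat \<Rightarrow> 'a) set set. ultra_ideal U I \<longrightarrow> I = {ucls U (\<lambda>n. 0)} \<or> I = ultrapower U)"

end

theory Submission
  imports Defs
begin

lemma lin_cont_bl:
  fixes f :: "'a::real_normed_vector \<Rightarrow> 'b::real_normed_vector"
  assumes lin: "linear f" and c: "continuous_on UNIV f"
  shows "bounded_linear f"
proof -
  have "isCont f 0" using c by (simp add: continuous_on_eq_continuous_at)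
  then obtain d where d: "d > 0" and hd: "\<And>x. dist x 0 < d \<Longrightarrow> dist (f x) (f 0) < 1"
    unfolding continuous_at_eps_delta by (metis zero_less_one)
  have f0: "f 0 = 0" using lin by (simp add: linear_0)
  have "norm (f x) \<le> norm x * (2/d)" for x
  proof (cases "x = 0")
    case True then show ?thesis by (simp add: f0)
  next
    case False
    define s where "s = d / (2 * norm x)"
    have s: "s > 0" using False d by (simp add: s_def)
    have "norm (s *\<^sub>R x) = d/2" using False d by (simp add: s_def)
    hence "norm (f (s *\<^sub>R x)) < 1" using hd[of "s *\<^sub>R x"] d f0 by simp
    hence "s * norm (f x) < 1" using lin s by (simp add: linear_scale)
    hence "norm (f x) < 1 / s" using s by (simp add: field_simps)
    also have "1 / s = norm x * (2/d)" using False d by (simp add: s_def)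
    finally show ?thesis by simp
  qed
  hence "\<exists>K. \<forall>x. norm (f x) \<le> norm x * K" by blast
  thus ?thesis using lin by (intro bounded_linear.intro bounded_linear_axioms.intro)
qed

lemma linf_bl:
  assumes "bounded_linear f" "x \<in> linf"
  shows "(\<lambda>n. f (x n)) \<in> linf"
proof -
  interpret bounded_linear f by fact
  obtain K where K: "\<And>z. norm (f z) \<le> norm z * K" "K > 0" using pos_bounded by blast
  obtain B where B: "\<And>n. norm (x n) \<le> B" using assms(2) unfolding linf_def bounded_iff by auto
  have "norm (f (x n)) \<le> B * K" for n using K(1)[of "x n"] B[of n] K(2)
    by (meson mult_right_mono less_imp_le order_trans)
  thus ?thesis unfolding linf_def bounded_iff by auto
qed

theorem proposition2p9:
  fixes U :: "nat filter"
  assumes "is_ultrafilter U" and "non_principal U"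
    and "ultrapower_simple U TYPE('a::{real_normed_algebra, banach})"
  shows "\<forall>\<psi> :: 'a \<Rightarrow> 'b::{real_normed_algebra, banach}.
           linear \<psi> \<and> (\<forall>x y. \<psi> (x * y) = \<psi> x * \<psi> y) \<and> continuous_on UNIV \<psi> \<and> \<psi> \<noteq> (\<lambda>x. 0)
           \<longrightarrow> (\<exists>c>0. \<forall>a. norm (\<psi> a) \<ge> c * norm a)"
proof (intro allI impI)
  fix \<psi> :: "'a \<Rightarrow> 'b"
  assume H: "linear \<psi> \<and> (\<forall>x y. \<psi> (x * y) = \<psi> x * \<psi> y) \<and> continuous_on UNIV \<psi> \<and> \<psi> \<noteq> (\<lambda>x. 0)"
  have bl: "bounded_linear \<psi>" using H lin_cont_bl by blast
  interpret bounded_linear \<psi> by fact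
  have mul: "\<And>x y. \<psi> (x * y) = \<psi> x * \<psi> y" using H by blast
  obtain b where b: "\<psi> b \<noteq> 0" using H by (metis ext)
  have Unb: "U \<noteq> bot" using assms(1) unfolding is_ultrafilter_def by blast
  have cls_self: "x \<in> ucls U x" if "x \<in> linf" for x :: "nat \<Rightarrow> 'a"
    using that unfolding ucls_def cU_def linf_def by simp
  define P where "P x \<longleftrightarrow> ((\<lambda>n. \<psi> (x n)) \<longlongrightarrow> 0) U" for x :: "nat \<Rightarrow> 'a"
  have key: "P x" if "x \<in> linf" "y \<in> linf" "ucls U x = ucls U y" "P y" for x y :: "nat \<Rightarrow> 'a"
  proof -
    have "x \<in> ucls U y" using cls_self[OF that(1)] that(3) by simp
    hence "((\<lambda>n. norm (y n - x n)) \<longlongrightarrow> 0) U" unfolding ucls_def cU_def by simp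
    hence "((\<lambda>n. y n - x n) \<longlongrightarrow> 0) U" by (simp add: tendsto_norm_zero_iff)
    hence "((\<lambda>n. \<psi> (y n - x n)) \<longlongrightarrow> 0) U" using tendsto[of _ 0] by (metis zero)
    hence "((\<lambda>n. \<psi> (y n) - \<psi> (y n - x n)) \<longlongrightarrow> 0 - 0) U"
      using that(4) unfolding P_def by (intro tendsto_diff)
    thus ?thesis unfolding P_def by (simp add: diff)
  qed
  define I where "I = {ucls U x | x. x \<in> linf \<and> P x}"
  have memI: "ucls U x \<in> I \<longleftrightarrow> P x" if "x \<in> linf" for x
  proof
    assume "ucls U x \<in> I"
    then obtain y where "y \<in> linf" "P y" "ucls U x = ucls U y" unfolding I_def by auto
    thus "P x" using key that by blast
  next
    assume "P x" thus "ucls U x \<in> I" using that unfolding I_def by auto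
  qed
  have lin0: "(\<lambda>n. 0::'a) \<in> linf" unfolding linf_def by simp
  have linB: "x \<in> linf \<longleftrightarrow> (\<exists>B. \<forall>n. norm (x n) \<le> B)" for x :: "nat \<Rightarrow> 'a"
    unfolding linf_def bounded_iff by auto
  have linadd: "(\<lambda>n. x n + y n) \<in> linf" if h: "x \<in> linf" "y \<in> linf" for x y :: "nat \<Rightarrow> 'a"
  proof -
    obtain A where A: "\<forall>n. norm (x n) \<le> A" using h(1) linB by blast
    obtain B where B: "\<forall>n. norm (y n) \<le> B" using h(2) linB by blast
    from A B have "\<forall>n. norm (x n + y n) \<le> A + B" by (meson add_mono norm_triangle_ineq order_trans)
    thus ?thesis using linB by blast
  qed
  have linsc: "(\<lambda>n. c *\<^sub>R x n) \<in> linf" if h: "x \<in> linf" for x :: "nat \<Rightarrow> 'a" and c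
  proof -
    obtain A where "\<forall>n. norm (x n) \<le> A" using h linB by blast
    hence "\<forall>n. norm (c *\<^sub>R x n) \<le> \<bar>c\<bar> * A" by (simp add: mult_left_mono)
    thus ?thesis using linB by blast
  qed
  have linmul: "(\<lambda>n. x n * y n) \<in> linf" if h: "x \<in> linf" "y \<in> linf" for x y :: "nat \<Rightarrow> 'a"
  proof -
    obtain A where A: "\<forall>n. norm (x n) \<le> A" using h(1) linB by blast
    obtain B where B: "\<forall>n. norm (y n) \<le> B" using h(2) linB by blast
    have "norm (x n * y n) \<le> A * B" for n
      using norm_mult_ineq[of "x n" "y n"] A B by (meson mult_mono norm_ge_zero order_trans)
    thus ?thesis using linB by blast
  qed
  have P0: "P (\<lambda>n. 0)" unfolding P_def by (simp add: zero)
  have Padd: "P (\<lambda>n. x n + y n)" if "P x" "P y" for x y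
    using tendsto_add[OF that[unfolded P_def]] unfolding P_def by (simp add: add)
  have Psc: "P (\<lambda>n. c *\<^sub>R x n)" if "P x" for x c
    using tendsto_scaleR[OF tendsto_const[of c] that[unfolded P_def]] unfolding P_def by (simp add: scaleR)
  have Pmul: "P (\<lambda>n. a n * x n) \<and> P (\<lambda>n. x n * a n)" if "P x" "a \<in> linf" for x a
  proof -
    have "(\<lambda>n. \<psi> (a n)) \<in> linf" using linf_bl[OF bl that(2)] .
    then obtain C where C: "\<forall>n. norm (\<psi> (a n)) \<le> C" unfolding linf_def bounded_iff by auto
    have x0: "((\<lambda>n. \<psi> (x n)) \<longlongrightarrow> 0) U" using that(1) P_def by simp
    have "((\<lambda>n. \<psi> (a n * x n)) \<longlongrightarrow> 0) U"
    proof (rule tendsto_0_le[OF x0, of _ C], rule always_eventually, rule allI)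
      fix n
      have "norm (\<psi> (a n * x n)) \<le> norm (\<psi> (a n)) * norm (\<psi> (x n))" by (simp add: mul norm_mult_ineq)
      also have "\<dots> \<le> C * norm (\<psi> (x n))" using C by (simp add: mult_right_mono)
      finally show "norm (\<psi> (a n * x n)) \<le> norm (\<psi> (x n)) * C" by (simp add: mult.commute)
    qed
    moreover have "((\<lambda>n. \<psi> (x n * a n)) \<longlongrightarrow> 0) U"
    proof (rule tendsto_0_le[OF x0, of _ C], rule always_eventually, rule allI)
      fix n
      have "norm (\<psi> (x n * a n)) \<le> norm (\<psi> (x n)) * norm (\<psi> (a n))" by (simp add: mul norm_mult_ineq)
      also have "\<dots> \<le> norm (\<psi> (x n)) * C" using C by (simp add: mult_left_mono)
      finally show "norm (\<psi> (x n * a n)) \<le> norm (\<psi> (x n)) * C" .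
    qed
    ultimately show ?thesis unfolding P_def by simp
  qed
  have idl: "ultra_ideal U I"
    unfolding ultra_ideal_def
  proof (intro conjI ballI allI impI)
    show "I \<subseteq> ultrapower U" unfolding I_def ultrapower_def by auto
    show "ucls U (\<lambda>n. 0) \<in> I" using memI[OF lin0] P0 by simp
  next
    fix x y :: "nat \<Rightarrow> 'a" assume "x \<in> linf" "y \<in> linf" "ucls U x \<in> I" "ucls U y \<in> I"
    thus "ucls U (\<lambda>n. x n + y n) \<in> I" using memI linadd Padd by blast
  next
    fix x :: "nat \<Rightarrow> 'a" and c :: real assume "x \<in> linf" "ucls U x \<in> I"
    thus "ucls U (\<lambda>n. c *\<^sub>R x n) \<in> I" using memI linsc Psc by blast
  next
    fix x a :: "nat \<Rightarrow> 'a" assume "x \<in> linf" "a \<in> linf" "ucls U x \<in> I"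
    thus "ucls U (\<lambda>n. a n * x n) \<in> I" "ucls U (\<lambda>n. x n * a n) \<in> I"
      using memI linmul Pmul by blast+
  qed
  have "I \<noteq> ultrapower U"
  proof
    assume "I = ultrapower U"
    have bl: "(\<lambda>n. b) \<in> linf" unfolding linf_def by simp
    hence "ucls U (\<lambda>n. b) \<in> I" using \<open>I = ultrapower U\<close> unfolding ultrapower_def by auto
    hence "((\<lambda>n. \<psi> b) \<longlongrightarrow> 0) U" using memI[OF bl] P_def by simp
    hence "\<psi> b = 0" using tendsto_unique[OF Unb tendsto_const] by blast
    thus False using b by simp
  qed
  hence I0: "I = {ucls U (\<lambda>n. 0)}" using idl assms(3) unfolding ultrapower_simple_def by blast
  have Useq: "U \<le> sequentially"
    unfolding le_sequentially
  proof
    fix N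
    have "\<forall>k\<in>{..<N}. eventually (\<lambda>n. n \<noteq> k) U"
    proof
      fix k
      have "\<not> eventually (\<lambda>n. n \<in> {k}) U" using assms(2) unfolding non_principal_def by simp
      hence "eventually (\<lambda>n. n \<notin> {k}) U" using assms(1) unfolding is_ultrafilter_def by blast
      thus "eventually (\<lambda>n. n \<noteq> k) U" by simp
    qed
    hence "eventually (\<lambda>n. \<forall>k\<in>{..<N}. n \<noteq> k) U" by (simp add: eventually_ball_finite)
    thus "eventually (\<lambda>n. N \<le> n) U" by (rule eventually_mono) (auto simp: not_le)
  qed
  show "\<exists>c>0. \<forall>a. norm (\<psi> a) \<ge> c * norm a"
  proof (rule ccontr)
    assume nb: "\<not> ?thesis"
    have "\<exists>a. norm a = 1 \<and> norm (\<psi> a) < inverse (real (Suc n))" for n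
    proof -
      have "inverse (real (Suc n)) > 0" by simp
      then obtain a where a: "norm (\<psi> a) < inverse (real (Suc n)) * norm a" using nb by (meson not_le)
      hence a0: "a \<noteq> 0" by (auto simp: zero)
      define a' where "a' = (1 / norm a) *\<^sub>R a"
      have "norm a' = 1" using a0 by (simp add: a'_def)
      moreover have "norm (\<psi> a') = norm (\<psi> a) / norm a" using a0 by (simp add: a'_def scaleR)
      moreover have "norm (\<psi> a) / norm a < inverse (real (Suc n))" using a a0 by (simp add: divide_less_eq)
      ultimately show ?thesis by auto
    qed
    then obtain a where a: "\<And>n. norm (a n) = 1" "\<And>n. norm (\<psi> (a n)) < inverse (real (Suc n))"
      by metis
    have al: "a \<in> linf" using linB a(1) by (metis order_refl)
    have "(\<lambda>n. \<psi> (a n)) \<longlonglongrightarrow> 0"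
      by (rule tendsto_0_le[OF LIMSEQ_inverse_real_of_nat, of _ 1]) (use a(2) less_imp_le in \<open>auto intro!: always_eventually\<close>)
    hence "P a" unfolding P_def using filterlim_mono[OF _ order_refl Useq] by blast
    hence "ucls U a \<in> I" using memI al by blast
    hence "a \<in> ucls U (\<lambda>n. 0)" using I0 cls_self[OF al] by simp
    hence "((\<lambda>n. norm (0 - a n)) \<longlongrightarrow> 0) U" unfolding ucls_def cU_def by simp
    hence "((\<lambda>n. 1::real) \<longlongrightarrow> 0) U" using a(1) by simp
    hence "(1::real) = 0" using tendsto_unique[OF Unb tendsto_const] by blast
    thus False by simp
  qed
qed

end
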